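(* Let $f : \mathbb{Z}_{\geqslant 1} \to \mathbb{C}$ be an arithmetic function and for real $x \geqslant 1$ set $$S_{r}(x)=\sum_{n_{1}\leqslant x,\dots,n_{r}\leqslant x}\left( f ( n_1 ) + \dotsb + f ( n_r ) \right) \left \lfloor \frac{x}{n_1 \dotsb n_r}\right \rfloor .$$ Define recursively $$T_{1}(x)=\sum_{n \leqslant x} \left \lfloor \frac{x}{n} \right \rfloor (f \star \mathbf{1}) (n), \qquad T_{r}(x) = \sum_{n \leqslant x} T_{r-1} \left( \frac{x}{n} \right) \quad ( r \in \mathbb{Z}_{\geqslant 2} ).$$ Then for every $r \in \mathbb{Z}_{\geqslant 2}$ and every real $x \geqslant 1$, $S_{r}(x)=r\, T_{r-1}(x)$.
   Context: $\lfloor\cdot\rfloor$ is the integer part; sums run over positive integers. $\mathbf{1}$ is the constant function $1$, and $(F \star G)(n) := \sum_{d \mid n} F(d) G(n/d)$ is Dirichlet convolution. *)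

theory Defs
  imports "HOL-Analysis.Analysis"
begin

definition dconv :: "(nat \<Rightarrow> complex) \<Rightarrow> (nat \<Rightarrow> complex) \<Rightarrow> nat \<Rightarrow> complex" where
  "dconv F G n = (\<Sum>d | d dvd n. F d * G (n div d))"

definition one_fn :: "nat \<Rightarrow> complex" where
  "one_fn n = 1"

definition S :: "(nat \<Rightarrow> complex) \<Rightarrow> nat \<Rightarrow> real \<Rightarrow> complex" where
  "S f r x = (\<Sum>ns \<in> PiE {..<r} (\<lambda>_. {1..nat \<lfloor>x\<rfloor>}).
      (\<Sum>i<r. f (ns i)) * of_int \<lfloor>x / real (\<Prod>i<r. ns i)\<rfloor>)"

text \<open>T_r(x), defined for r \<ge> 1; the value at r = 0 is an irrelevant default.\<close>
fun T :: "(nat \<Rightarrow> complex) \<Rightarrow> nat \<Rightarrow> real \<Rightarrow> complex" where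
  "T f 0 x = 0"
| "T f (Suc 0) x = (\<Sum>n \<in> {1..nat \<lfloor>x\<rfloor>}. of_int \<lfloor>x / real n\<rfloor> * dconv f one_fn n)"
| "T f (Suc (Suc r)) x = (\<Sum>n \<in> {1..nat \<lfloor>x\<rfloor>}. T f (Suc r) (x / real n))"

end

theory Submission imports Defs begin

definition G :: "(nat \<Rightarrow> complex) \<Rightarrow> nat \<Rightarrow> real \<Rightarrow> complex" where
  "G f m y = (\<Sum>ns \<in> PiE {..<m} (\<lambda>_. {1..nat \<lfloor>y\<rfloor>}).
      f (ns 0) * of_int \<lfloor>y / real (\<Prod>i<m. ns i)\<rfloor>)"

lemma PiE_Suc_sum:
  "sum h (PiE {..<Suc m} (\<lambda>_. A)) = (\<Sum>(a,g) \<in> A \<times> PiE {..<m} (\<lambda>_. A). h (g(m:=a)))"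
proof -
  have "PiE {..<Suc m} (\<lambda>_. A) = (\<lambda>(y, g). g(m := y)) ` (A \<times> PiE {..<m} (\<lambda>_. A))"
    using PiE_insert_eq[of m "{..<m}" "\<lambda>_. A"] by (simp add: lessThan_Suc)
  moreover have "inj_on (\<lambda>(y, g). g(m := y)) (A \<times> PiE {..<m} (\<lambda>_. A))"
    using inj_combinator[of m "{..<m}" "\<lambda>_. A"] by simp
  ultimately show ?thesis by (simp add: sum.reindex case_prod_unfold comp_def)
qed

lemma prod_ge_factor:
  fixes m j :: nat and ns :: "nat \<Rightarrow> nat"
  assumes "\<And>i. i < m \<Longrightarrow> ns i \<ge> (1::nat)" "j < m"
  shows "ns j \<le> (\<Prod>i<m. ns i)"
proof -
  have "(\<Prod>i<m. ns i) = ns j * (\<Prod>i\<in>{..<m}-{j}. ns i)"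
    by (rule prod.remove) (use assms(2) in auto)
  moreover have "(\<Prod>i\<in>{..<m}-{j}. ns i) \<ge> 1"
    using assms(1) by (intro prod_ge_1) auto
  ultimately show ?thesis by simp
qed

lemma ext_sum:
  fixes g :: "(nat \<Rightarrow> nat) \<Rightarrow> complex"
  assumes "y \<ge> 0" "nat \<lfloor>y\<rfloor> \<le> M"
  shows "(\<Sum>ns \<in> PiE {..<m} (\<lambda>_. {1..nat \<lfloor>y\<rfloor>}). g ns * of_int \<lfloor>y / real (\<Prod>i<m. ns i)\<rfloor>)
       = (\<Sum>ns \<in> PiE {..<m} (\<lambda>_. {1..M}). g ns * of_int \<lfloor>y / real (\<Prod>i<m. ns i)\<rfloor>)"
proof (rule sum.mono_neutral_left)
  show "finite (PiE {..<m} (\<lambda>_. {1..M}))" by (simp add: finite_PiE)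
  show "PiE {..<m} (\<lambda>_. {1..nat \<lfloor>y\<rfloor>}) \<subseteq> PiE {..<m} (\<lambda>_. {1..M})"
    using assms(2) by (intro PiE_mono) auto
  show "\<forall>ns\<in>PiE {..<m} (\<lambda>_. {1..M}) - PiE {..<m} (\<lambda>_. {1..nat \<lfloor>y\<rfloor>}).
          g ns * of_int \<lfloor>y / real (\<Prod>i<m. ns i)\<rfloor> = 0"
  proof
    fix ns assume ns: "ns \<in> PiE {..<m} (\<lambda>_. {1..M}) - PiE {..<m} (\<lambda>_. {1..nat \<lfloor>y\<rfloor>})"
    then obtain j where j: "j < m" "ns j > nat \<lfloor>y\<rfloor>"
      by (auto simp: PiE_iff)
    have ge1: "\<And>i. i < m \<Longrightarrow> ns i \<ge> 1" using ns by (auto simp: PiE_iff)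
    have "ns j \<le> (\<Prod>i<m. ns i)" by (rule prod_ge_factor[OF ge1 j(1)])
    moreover have "real (ns j) > y"
    proof -
      have "real (ns j) \<ge> real (nat \<lfloor>y\<rfloor>) + 1" using j(2) by simp
      moreover have "real (nat \<lfloor>y\<rfloor>) = of_int \<lfloor>y\<rfloor>" using assms(1) by simp
      ultimately show ?thesis using real_of_int_floor_add_one_gt[of y] by linarith
    qed
    ultimately have P: "real (\<Prod>i<m. ns i) > y" by (meson less_le_trans of_nat_le_iff)
    hence "0 \<le> y / real (\<Prod>i<m. ns i)" "y / real (\<Prod>i<m. ns i) < 1"
      using assms(1) by (auto simp: divide_simps)
    hence "\<lfloor>y / real (\<Prod>i<m. ns i)\<rfloor> = 0" by (simp add: floor_eq_iff)
    thus "g ns * of_int \<lfloor>y / real (\<Prod>i<m. ns i)\<rfloor> = 0" by simp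
  qed
qed

lemma step:
  assumes "y \<ge> 0"
  shows "G f (Suc (Suc k)) y = (\<Sum>n\<in>{1..nat \<lfloor>y\<rfloor>}. G f (Suc k) (y / real n))"
proof -
  define A where "A = {1..nat \<lfloor>y\<rfloor>}"
  define m where "m = Suc k"
  have "G f (Suc m) y = (\<Sum>(a::nat,g) \<in> A \<times> PiE {..<m} (\<lambda>_. A).
      f ((g(m:=a)) 0) * of_int \<lfloor>y / real (\<Prod>i<Suc m. (g(m:=a)) i)\<rfloor>)"
    unfolding G_def A_def by (rule PiE_Suc_sum)
  also have "\<dots> = (\<Sum>(a::nat,g) \<in> A \<times> PiE {..<m} (\<lambda>_. A).
      f (g 0) * of_int \<lfloor>(y / real a) / real (\<Prod>i<m. g i)\<rfloor>)"
  proof (rule sum.cong[OF refl], clarify)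
    fix a :: nat and g :: "nat \<Rightarrow> nat"
    have "(\<Prod>i<Suc m. (g(m:=a)) i) = (\<Prod>i<m. g i) * a"
      by (simp add: prod.lessThan_Suc)
    thus "f ((g(m:=a)) 0) * of_int \<lfloor>y / real (\<Prod>i<Suc m. (g(m:=a)) i)\<rfloor> =
       f (g 0) * of_int \<lfloor>(y / real a) / real (\<Prod>i<m. g i)\<rfloor>"
      by (simp add: m_def mult.commute)
  qed
  also have "\<dots> = (\<Sum>a\<in>A. \<Sum>g\<in>PiE {..<m} (\<lambda>_. A).
      f (g 0) * of_int \<lfloor>(y / real a) / real (\<Prod>i<m. g i)\<rfloor>)"
    by (rule sum.cartesian_product[symmetric])
  also have "\<dots> = (\<Sum>a\<in>A. G f m (y / real a))"
  proof (rule sum.cong[OF refl])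
    fix a assume a: "a \<in> A"
    have "y / real a \<le> y" using a assms by (auto simp: A_def divide_simps mult_le_cancel_left1)
    hence le: "nat \<lfloor>y / real a\<rfloor> \<le> nat \<lfloor>y\<rfloor>" by (simp add: floor_mono nat_mono)
    show "(\<Sum>g\<in>PiE {..<m} (\<lambda>_. A). f (g 0) * of_int \<lfloor>(y / real a) / real (\<Prod>i<m. g i)\<rfloor>)
        = G f m (y / real a)"
      unfolding G_def A_def
      by (rule ext_sum[symmetric]) (use assms le in auto)
  qed
  finally show ?thesis by (simp add: m_def A_def)
qed

lemma floor_zero:
  assumes "y \<ge> 0" "k > nat \<lfloor>y\<rfloor>"
  shows "\<lfloor>y / real k\<rfloor> = 0"
proof -
  have "real k \<ge> real (nat \<lfloor>y\<rfloor>) + 1" using assms(2) by simp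
  moreover have "real (nat \<lfloor>y\<rfloor>) = of_int \<lfloor>y\<rfloor>" using assms(1) by simp
  ultimately have "real k > y" using real_of_int_floor_add_one_gt[of y] by linarith
  hence "0 \<le> y / real k" "y / real k < 1" using assms(1) by (auto simp: divide_simps)
  thus ?thesis by (simp add: floor_eq_iff)
qed

lemma G2:
  "G f 2 y = (\<Sum>a\<in>{1..nat \<lfloor>y\<rfloor>}. \<Sum>b\<in>{1..nat \<lfloor>y\<rfloor>}. f b * of_int \<lfloor>y / real (b*a)\<rfloor>)"
  unfolding G_def numeral_2_eq_2
  by (simp add: PiE_Suc_sum sum.cartesian_product[symmetric])

lemma divhelper:
  assumes "n \<in> {1..(N::nat)}" "d dvd n"
  shows "n div d \<in> {1..N} \<and> d \<in> {1..N} \<and> n div d * d \<le> N"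
proof -
  have nN: "n \<le> N" "n > 0" using assms by auto
  hence dn: "d \<le> n" "d > 0" using assms(2) by (auto intro: dvd_imp_le)
  hence g1: "n div d \<ge> 1" using div_le_mono[of d n d] by simp
  have "n div d \<le> n" by (rule div_le_dividend)
  hence g2: "n div d \<le> N" using nN by linarith
  have g3: "n div d * d = n" using assms(2) by simp
  show ?thesis using g1 g2 g3 nN dn by auto
qed

lemma dh1: "d dvd n \<Longrightarrow> Suc 0 \<le> n \<Longrightarrow> n \<le> (N::nat) \<Longrightarrow> n div d \<le> N"
  using divhelper[of n N d] by auto

lemma dh2: "d dvd n \<Longrightarrow> Suc 0 \<le> n \<Longrightarrow> n \<le> (N::nat) \<Longrightarrow> d \<le> N"
  using divhelper[of n N d] by auto

lemma base:
  assumes "y \<ge> 0"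
  shows "T f (Suc 0) y = G f 2 y"
proof -
  define N where "N = nat \<lfloor>y\<rfloor>"
  define A where "A = {1..N}"
  have "G f 2 y = (\<Sum>(a,b)\<in>A \<times> A. f b * of_int \<lfloor>y / real (b*a)\<rfloor>)"
    unfolding G2 A_def N_def by (simp add: sum.cartesian_product)
  also have "\<dots> = (\<Sum>(a,b)\<in>{(a,b)\<in>A \<times> A. a*b \<le> N}. f b * of_int \<lfloor>y / real (b*a)\<rfloor>)"
  proof -
    have zh: "\<And>a b. \<not> a*b \<le> N \<Longrightarrow> f b * of_int \<lfloor>y / real (b*a)\<rfloor> = 0"
    proof -
      fix a b :: nat assume "\<not> a*b \<le> N"
      hence "\<lfloor>y / real (b*a)\<rfloor> = 0" using floor_zero[OF assms, of "b*a"] by (simp add: N_def mult.commute)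
      thus "f b * of_int \<lfloor>y / real (b*a)\<rfloor> = 0" by simp
    qed
    have zh2: "\<And>a b. \<not> a*b \<le> N \<Longrightarrow> \<lfloor>y / (real b * real a)\<rfloor> = 0"
    proof -
      fix a b :: nat assume "\<not> a*b \<le> N"
      hence "\<lfloor>y / real (b*a)\<rfloor> = 0" using floor_zero[OF assms, of "b*a"] by (simp add: N_def mult.commute)
      thus "\<lfloor>y / (real b * real a)\<rfloor> = 0" by simp
    qed
    show ?thesis
      apply (rule sum.mono_neutral_right)
        apply (auto simp: A_def)
      using zh2 apply metis
      done
  qed
  also have "\<dots> = (\<Sum>(n,d)\<in>Sigma A (\<lambda>n. {d. d dvd n}). f d * of_int \<lfloor>y / real n\<rfloor>)"
    by (rule sum.reindex_bij_witness[where i="\<lambda>(n,d). (n div d, d)" and j="\<lambda>(a,b). (a*b, b)"])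
       (auto simp: A_def mult.commute intro: dh1 dh2)
  also have "\<dots> = (\<Sum>n\<in>A. \<Sum>d\<in>{d. d dvd n}. f d * of_int \<lfloor>y / real n\<rfloor>)"
    by (rule sum.Sigma[symmetric]) (auto simp: A_def)
  also have "\<dots> = T f (Suc 0) y"
    by (simp add: A_def N_def dconv_def one_fn_def sum_distrib_left sum_distrib_right mult.commute)
  finally show ?thesis ..
qed

lemma TG:
  assumes "y \<ge> 0"
  shows "T f (Suc k) y = G f (Suc (Suc k)) y"
  using assms
proof (induction k arbitrary: y)
  case 0
  then show ?case using base[of y f] by (simp add: numeral_2_eq_2)
next
  case (Suc k)
  have "T f (Suc (Suc k)) y = (\<Sum>n\<in>{1..nat \<lfloor>y\<rfloor>}. T f (Suc k) (y / real n))" by simp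
  also have "\<dots> = (\<Sum>n\<in>{1..nat \<lfloor>y\<rfloor>}. G f (Suc (Suc k)) (y / real n))"
    using Suc by (intro sum.cong refl Suc.IH) auto
  also have "\<dots> = G f (Suc (Suc (Suc k))) y" using step[OF Suc.prems] by simp
  finally show ?case .
qed

lemma sym:
  fixes F :: "nat \<Rightarrow> complex" and f :: "nat \<Rightarrow> complex" and i r :: nat and B :: "nat set"
  assumes "i < r"
  shows "(\<Sum>ns\<in>PiE {..<r} (\<lambda>_. B). f (ns i) * F (\<Prod>j<r. ns j))
       = (\<Sum>ns\<in>PiE {..<r} (\<lambda>_. B). f (ns 0) * F (\<Prod>j<r. ns j))"
proof -
  define \<sigma> :: "nat \<Rightarrow> nat" where "\<sigma> = (\<lambda>j::nat. if j = i then 0 else if j = 0 then i else j)"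
  have ss: "\<sigma> (\<sigma> j) = j" for j by (simp add: \<sigma>_def)
  have sr: "j < r \<Longrightarrow> \<sigma> j < r" for j using assms by (auto simp: \<sigma>_def)
  have sge: "\<not> j < r \<Longrightarrow> \<sigma> j = j" for j using assms by (auto simp: \<sigma>_def)
  have s0: "\<sigma> 0 = i" by (simp add: \<sigma>_def)
  have pr: "(\<Prod>j<r. ns (\<sigma> j)) = (\<Prod>j<r. ns j)" for ns :: "nat \<Rightarrow> nat"
  proof (rule prod.reindex_bij_witness[where i=\<sigma> and j=\<sigma>])
    show "\<And>a. a \<in> {..<r} \<Longrightarrow> \<sigma> (\<sigma> a) = a" by (rule ss)
    show "\<And>a. a \<in> {..<r} \<Longrightarrow> \<sigma> a \<in> {..<r}" using sr by blast
    show "\<And>a. a \<in> {..<r} \<Longrightarrow> \<sigma> (\<sigma> a) = a" by (rule ss)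
    show "\<And>a. a \<in> {..<r} \<Longrightarrow> \<sigma> a \<in> {..<r}" using sr by blast
    show "\<And>a. a \<in> {..<r} \<Longrightarrow> ns (\<sigma> a) = ns (\<sigma> a)" by (rule refl)
  qed
  have inv: "ns \<circ> \<sigma> \<circ> \<sigma> = ns" for ns :: "nat \<Rightarrow> nat"
    by (rule ext) (simp add: ss)
  have mem: "ns \<circ> \<sigma> \<in> PiE {..<r} (\<lambda>_. B)" if "ns \<in> PiE {..<r} (\<lambda>_. B)" for ns
  proof (rule PiE_I)
    fix j assume "j \<in> {..<r}"
    hence "\<sigma> j \<in> {..<r}" using sr by blast
    hence "ns (\<sigma> j) \<in> B" using that by (intro PiE_mem[of ns "{..<r}" "\<lambda>_. B"]) auto
    thus "(ns \<circ> \<sigma>) j \<in> B" by (simp only: comp_def)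
  next
    fix j assume "j \<notin> {..<r}"
    hence "\<sigma> j = j" using sge by blast
    moreover have "ns j = undefined" using that \<open>j \<notin> {..<r}\<close> by (rule PiE_arb)
    ultimately show "(ns \<circ> \<sigma>) j = undefined" by (simp only: comp_def)
  qed
  show ?thesis
  proof (rule sum.reindex_bij_witness[where i="\<lambda>ns. ns \<circ> \<sigma>" and j="\<lambda>ns. ns \<circ> \<sigma>"])
    show "\<And>ns. ns \<in> PiE {..<r} (\<lambda>_. B) \<Longrightarrow> ns \<circ> \<sigma> \<circ> \<sigma> = ns" by (rule inv)
    show "\<And>ns. ns \<in> PiE {..<r} (\<lambda>_. B) \<Longrightarrow> ns \<circ> \<sigma> \<in> PiE {..<r} (\<lambda>_. B)" by (rule mem)
    show "\<And>ns. ns \<in> PiE {..<r} (\<lambda>_. B) \<Longrightarrow> ns \<circ> \<sigma> \<circ> \<sigma> = ns" by (rule inv)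
    show "\<And>ns. ns \<in> PiE {..<r} (\<lambda>_. B) \<Longrightarrow> ns \<circ> \<sigma> \<in> PiE {..<r} (\<lambda>_. B)" by (rule mem)
    fix ns :: "nat \<Rightarrow> nat"
    have "(\<Prod>j<r. (ns \<circ> \<sigma>) j) = (\<Prod>j<r. ns j)" using pr[of ns] by (simp only: comp_def)
    moreover have "(ns \<circ> \<sigma>) 0 = ns i" by (simp add: s0)
    ultimately show "f ((ns \<circ> \<sigma>) 0) * F (\<Prod>j<r. (ns \<circ> \<sigma>) j) = f (ns i) * F (\<Prod>j<r. ns j)"
      by simp
  qed
qed

theorem theorem5p1:
  fixes f :: "nat \<Rightarrow> complex" and r :: nat and x :: real
  assumes "r \<ge> 2" and "x \<ge> 1"
  shows "S f r x = of_nat r * T f (r - 1) x"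
proof -
  obtain k where r: "r = Suc (Suc k)" using assms(1) by (metis add_2_eq_Suc le_Suc_ex)
  define B where "B = {1..nat \<lfloor>x\<rfloor>}"
  define F where "F = (\<lambda>P::nat. (of_int \<lfloor>x / real P\<rfloor> :: complex))"
  have "S f r x = (\<Sum>ns\<in>PiE {..<r} (\<lambda>_. B). \<Sum>i<r. f (ns i) * F (\<Prod>j<r. ns j))"
    unfolding S_def B_def F_def by (simp add: sum_distrib_right)
  also have "\<dots> = (\<Sum>i<r. \<Sum>ns\<in>PiE {..<r} (\<lambda>_. B). f (ns i) * F (\<Prod>j<r. ns j))"
    by (rule sum.swap)
  also have "\<dots> = (\<Sum>i<r. G f r x)"
  proof (rule sum.cong[OF refl])
    fix i assume "i \<in> {..<r}"
    hence "(\<Sum>ns\<in>PiE {..<r} (\<lambda>_. B). f (ns i) * F (\<Prod>j<r. ns j))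
       = (\<Sum>ns\<in>PiE {..<r} (\<lambda>_. B). f (ns 0) * F (\<Prod>j<r. ns j))" by (intro sym) auto
    also have "\<dots> = G f r x" unfolding G_def B_def F_def ..
    finally show "(\<Sum>ns\<in>PiE {..<r} (\<lambda>_. B). f (ns i) * F (\<Prod>j<r. ns j)) = G f r x" .
  qed
  also have "\<dots> = of_nat r * T f (r - 1) x"
    using TG[of x f k] assms(2) r by simp
  finally show ?thesis .
qed

end
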